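(* Let $\tilde F=[\tilde{\mathbf{f}}_1,\dots,\tilde{\mathbf{f}}_K]\in\mathbb{R}^{n\times K}$, $\eta>0$, and $B=(b_{jl}):=(\tilde F^\top\tilde F+\eta I)^{-1}$. Then the $j$-th column of $\tilde FB$ is $$[\tilde FB]_j=b_{jj}\tilde{\mathbf{f}}_j+\sum_{l\ne j}b_{jl}\tilde{\mathbf{f}}_l,$$ and for every $l\ne j$, $$\mathrm{sign}(b_{jl})=-\mathrm{sign}\big(\tilde{\mathbf{f}}_j^\top P_{\eta,-jl}\tilde{\mathbf{f}}_l\big),$$ where $P_{\eta,-jl}:=I-\tilde F_{-jl}(\tilde F_{-jl}^\top\tilde F_{-jl}+\eta I)^{-1}\tilde F_{-jl}^\top$ and $\tilde F_{-jl}$ is $\tilde F$ with the $j$-th and $l$-th columns removed.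
   Context: In the paper, $\tilde F=(I-\mathbf{1}\mathbf{1}^\top/n)\sigma(XW)$ is the centered hidden-layer activation matrix of a 2-layer network with $K$ hidden neurons and $\eta$ is the weight decay. *)

theory Defs
  imports "Jordan_Normal_Form.Matrix"
begin

definition mat_inv :: "real mat \<Rightarrow> real mat" where
  "mat_inv A = (THE B. B \<in> carrier_mat (dim_row A) (dim_row A) \<and>
                      A * B = 1\<^sub>m (dim_row A) \<and> B * A = 1\<^sub>m (dim_row A))"

definition del_two_cols :: "nat \<Rightarrow> nat \<Rightarrow> real mat \<Rightarrow> real mat" where
  "del_two_cols j l F =
     mat_of_cols (dim_row F) [col F i. i \<leftarrow> [0..<dim_col F], i \<noteq> j, i \<noteq> l]"

definition P_proj :: "real \<Rightarrow> nat \<Rightarrow> nat \<Rightarrow> real mat \<Rightarrow> real mat" where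
  "P_proj \<eta> j l F =
     (let G = del_two_cols j l F in
      1\<^sub>m (dim_row F) - G * mat_inv (transpose_mat G * G + \<eta> \<cdot>\<^sub>m 1\<^sub>m (dim_col G)) * transpose_mat G)"

end

theory Submission
  imports Defs "Jordan_Normal_Form.Determinant"
begin

lemma dot_self_nonneg: "(v::real vec) \<bullet> v \<ge> 0"
  unfolding scalar_prod_def by (auto intro: sum_nonneg)

lemma dot_self_pos: assumes "(v::real vec) \<in> carrier_vec k" "v \<noteq> 0\<^sub>v k" shows "v \<bullet> v > 0"
proof -
  obtain i where i: "i < k" "v $ i \<noteq> 0" using assms by (metis eq_vecI carrier_vecD index_zero_vec(1) index_zero_vec(2))
  have "v $ i * v $ i \<le> (\<Sum>r\<in>{0..<k}. v $ r * v $ r)"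
    by (rule member_le_sum) (use i in auto)
  moreover have "v $ i * v $ i > 0" using i(2) by (metis not_real_square_gt_zero)
  ultimately show ?thesis unfolding scalar_prod_def using assms by auto
qed

lemma delta_sum: "i < K \<Longrightarrow> (\<Sum>ia = 0..<K. (\<eta>::real) * (if ia = i then 1 else 0) * v $ ia) = \<eta> * v $ i"
proof -
  assume "i < K"
  have "(\<Sum>ia = 0..<K. (\<eta>::real) * (if ia = i then 1 else 0) * v $ ia) = (\<Sum>ia = 0..<K. if ia = i then \<eta> * v $ ia else 0)"
    by (rule sum.cong) auto
  thus ?thesis using `i < K` by simp
qed

lemma quad:
  assumes F: "(F::real mat) \<in> carrier_mat n K" and v: "v \<in> carrier_vec K"
  shows "v \<bullet> ((transpose_mat F * F + \<eta> \<cdot>\<^sub>m 1\<^sub>m K) *\<^sub>v v) = (F *\<^sub>v v) \<bullet> (F *\<^sub>v v) + \<eta> * (v \<bullet> v)"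
proof -
  have "(transpose_mat F * F + \<eta> \<cdot>\<^sub>m 1\<^sub>m K) *\<^sub>v v = transpose_mat F *\<^sub>v (F *\<^sub>v v) + \<eta> \<cdot>\<^sub>v v"
    using F v by (subst add_mult_distrib_mat_vec[of _ K K]) (auto intro!: eq_vecI simp: scalar_prod_def delta_sum)
  moreover have "v \<bullet> (transpose_mat F *\<^sub>v (F *\<^sub>v v)) = (F *\<^sub>v v) \<bullet> (F *\<^sub>v v)"
    using transpose_vec_mult_scalar[OF F v, of "F *\<^sub>v v"] F v comm_scalar_prod[of v K]
    by auto
  ultimately show ?thesis using F v by (simp add: scalar_prod_add_distrib[of _ K])
qed

lemma reg_inv_exists:
  assumes F: "(F::real mat) \<in> carrier_mat n K" and eta: "\<eta> > 0"
  shows "\<exists>B. B \<in> carrier_mat K K \<and> (transpose_mat F * F + \<eta> \<cdot>\<^sub>m 1\<^sub>m K) * B = 1\<^sub>m K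
     \<and> B * (transpose_mat F * F + \<eta> \<cdot>\<^sub>m 1\<^sub>m K) = 1\<^sub>m K"
proof -
  let ?C = "transpose_mat F * F + \<eta> \<cdot>\<^sub>m 1\<^sub>m K"
  have C: "?C \<in> carrier_mat K K" using F by auto
  have "det ?C \<noteq> 0"
  proof
    assume "det ?C = 0"
    then obtain v where v: "v \<in> carrier_vec K" "v \<noteq> 0\<^sub>v K" "?C *\<^sub>v v = 0\<^sub>v K"
      using det_0_iff_vec_prod_zero_field[OF C] by auto
    have "v \<bullet> (?C *\<^sub>v v) = 0" using v by simp
    moreover have "v \<bullet> (?C *\<^sub>v v) > 0" unfolding quad[OF F v(1)]
      using dot_self_nonneg[of "F *\<^sub>v v"] dot_self_pos[OF v(1,2)] eta
      by (simp add: add_nonneg_pos)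
    ultimately show False by simp
  qed
  from det_non_zero_imp_unit[OF C this, of "()"]
  obtain B where B: "B \<in> carrier_mat K K" "B * ?C = 1\<^sub>m K"
    unfolding Units_def ring_mat_def by auto
  moreover have "?C * B = 1\<^sub>m K" using mat_mult_left_right_inverse[OF B(1) C B(2)] .
  ultimately show ?thesis by blast
qed

lemma mat_inv_eq:
  assumes A: "A \<in> carrier_mat k k" and B: "B \<in> carrier_mat k k" and AB: "A * B = 1\<^sub>m k" and BA: "B * A = 1\<^sub>m k"
  shows "mat_inv A = B"
  unfolding mat_inv_def
proof (rule the_equality)
  show "B \<in> carrier_mat (dim_row A) (dim_row A) \<and> A * B = 1\<^sub>m (dim_row A) \<and> B * A = 1\<^sub>m (dim_row A)"
    using A B AB BA by auto
  fix B' assume h: "B' \<in> carrier_mat (dim_row A) (dim_row A) \<and> A * B' = 1\<^sub>m (dim_row A) \<and> B' * A = 1\<^sub>m (dim_row A)"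
  hence B': "B' \<in> carrier_mat k k" "A * B' = 1\<^sub>m k" "B' * A = 1\<^sub>m k" using A by auto
  have "B' = B' * (A * B)" using AB B' by simp
  also have "\<dots> = (B' * A) * B" using A B B' by (simp add: assoc_mult_mat[symmetric])
  also have "\<dots> = B" using B' B by simp
  finally show "B' = B" .
qed

lemma reg_inv:
  assumes F: "(F::real mat) \<in> carrier_mat n K" and eta: "\<eta> > 0"
  defines "C \<equiv> transpose_mat F * F + \<eta> \<cdot>\<^sub>m 1\<^sub>m K"
  shows "mat_inv C \<in> carrier_mat K K" "C * mat_inv C = 1\<^sub>m K" "mat_inv C * C = 1\<^sub>m K"
    "transpose_mat (mat_inv C) = mat_inv C"
proof -
  obtain B where B: "B \<in> carrier_mat K K" "C * B = 1\<^sub>m K" "B * C = 1\<^sub>m K"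
    using reg_inv_exists[OF F eta] unfolding C_def by blast
  have Cc: "C \<in> carrier_mat K K" unfolding C_def using F by auto
  have e: "mat_inv C = B" by (rule mat_inv_eq[OF Cc B])
  show "mat_inv C \<in> carrier_mat K K" "C * mat_inv C = 1\<^sub>m K" "mat_inv C * C = 1\<^sub>m K" using e B by auto
  have CT: "transpose_mat C = C" unfolding C_def using F
    by (auto intro!: eq_matI simp: comm_scalar_prod[of _ n])
  have "transpose_mat B = B"
  proof -
    have "C * transpose_mat B = 1\<^sub>m K"
      using arg_cong[OF B(3), of transpose_mat] transpose_mult[of B K K C K] B Cc CT by auto
    moreover have "transpose_mat B * C = 1\<^sub>m K"
      using arg_cong[OF B(2), of transpose_mat] transpose_mult[of C K K B K] B Cc CT by auto
    ultimately have "mat_inv C = transpose_mat B" using mat_inv_eq[OF Cc, of "transpose_mat B"] B by auto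
    thus ?thesis using e by simp
  qed
  thus "transpose_mat (mat_inv C) = mat_inv C" using e by simp
qed

lemma minus_dot_expand:
  assumes "(f::real vec) \<in> carrier_vec n" "z \<in> carrier_vec n"
  shows "(f - z) \<bullet> (f - z) = f \<bullet> f - 2 * (f \<bullet> z) + z \<bullet> z"
proof -
  have "(f - z) \<bullet> (f - z) = (\<Sum>i=0..<n. f$i*f$i - 2*(f$i*z$i) + z$i*z$i)"
    unfolding scalar_prod_def using assms by (auto intro!: sum.cong simp: algebra_simps)
  also have "\<dots> = f \<bullet> f - 2 * (f \<bullet> z) + z \<bullet> z"
    unfolding scalar_prod_def using assms by (simp add: sum.distrib sum_subtractf sum_distrib_left)
  finally show ?thesis .
qed

lemma P_nonneg:
  assumes G: "(G::real mat) \<in> carrier_mat n m" and eta: "\<eta> > 0" and f: "f \<in> carrier_vec n"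
  defines "M \<equiv> mat_inv (transpose_mat G * G + \<eta> \<cdot>\<^sub>m 1\<^sub>m m)"
  shows "f \<bullet> ((1\<^sub>m n - G * M * transpose_mat G) *\<^sub>v f) \<ge> 0"
proof -
  let ?C = "transpose_mat G * G + \<eta> \<cdot>\<^sub>m 1\<^sub>m m"
  note R = reg_inv[OF G eta, folded M_def]
  have GT: "transpose_mat G \<in> carrier_mat m n" using G by auto
  define y where "y = M *\<^sub>v (transpose_mat G *\<^sub>v f)"
  have y: "y \<in> carrier_vec m" unfolding y_def using R(1) GT f mult_mat_vec_carrier by blast
  define z where "z = G *\<^sub>v y"
  have z: "z \<in> carrier_vec n" unfolding z_def using G y by auto
  have Cy: "?C *\<^sub>v y = transpose_mat G *\<^sub>v f"
  proof -
    have "?C *\<^sub>v y = (?C * M) *\<^sub>v (transpose_mat G *\<^sub>v f)"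
      unfolding y_def using R(1) GT f G by (subst assoc_mult_mat_vec[of _ m m]) auto
    thus ?thesis using R(2) GT f by simp
  qed
  have Pf: "(1\<^sub>m n - G * M * transpose_mat G) *\<^sub>v f = f - z"
  proof -
    have "(1\<^sub>m n - G * M * transpose_mat G) *\<^sub>v f = f - (G * M * transpose_mat G) *\<^sub>v f"
      using G R(1) GT f by (subst minus_mult_distrib_mat_vec[of _ n n]) auto
    also have "(G * M * transpose_mat G) *\<^sub>v f = z"
      unfolding z_def y_def using G R(1) GT f
      using assoc_mult_mat_vec[of "G * M" n m "transpose_mat G" n f] assoc_mult_mat_vec[of G n m M m "transpose_mat G *\<^sub>v f"]
      by auto
    finally show ?thesis .
  qed
  have fz: "f \<bullet> z = z \<bullet> z + \<eta> * (y \<bullet> y)"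
  proof -
    have "f \<bullet> z = (transpose_mat G *\<^sub>v f) \<bullet> y"
      unfolding z_def using transpose_vec_mult_scalar[OF G y f] by simp
    also have "\<dots> = y \<bullet> (?C *\<^sub>v y)" unfolding Cy[symmetric]
      using comm_scalar_prod[of y m "?C *\<^sub>v y"] y G mult_mat_vec_carrier[of ?C m m y] by auto
    also have "\<dots> = z \<bullet> z + \<eta> * (y \<bullet> y)" unfolding quad[OF G y] z_def ..
    finally show ?thesis .
  qed
  have "f \<bullet> (f - z) = f \<bullet> f - f \<bullet> z" using f z by (simp add: scalar_prod_minus_distrib)
  also have "\<dots> = (f - z) \<bullet> (f - z) + \<eta> * (y \<bullet> y)"
    using minus_dot_expand[OF f z] fz by simp
  also have "\<dots> \<ge> 0" using dot_self_nonneg[of "f - z"] dot_self_nonneg[of y] eta by simp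
  finally show ?thesis unfolding Pf by simp
qed

lemma Cv_comp:
  assumes F: "(F::real mat) \<in> carrier_mat n K" and v: "v \<in> carrier_vec K" and i: "i < K"
  shows "((transpose_mat F * F + \<eta> \<cdot>\<^sub>m 1\<^sub>m K) *\<^sub>v v) $ i = col F i \<bullet> (F *\<^sub>v v) + \<eta> * v $ i"
proof -
  have "(transpose_mat F * F + \<eta> \<cdot>\<^sub>m 1\<^sub>m K) *\<^sub>v v = transpose_mat F *\<^sub>v (F *\<^sub>v v) + \<eta> \<cdot>\<^sub>v v"
    using F v by (subst add_mult_distrib_mat_vec[of _ K K]) (auto intro!: eq_vecI simp: scalar_prod_def delta_sum)
  thus ?thesis using F v i by simp
qed

lemma reindex_sum: "distinct xs \<Longrightarrow> (\<Sum>s\<in>{0..<length xs}. g (xs ! s)) = sum g (set xs)"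
  using sum_list_sum_nth[of "map g xs"] sum_list_distinct_conv_sum_set[of xs g] by simp

lemma listcomp2: "[f i. i \<leftarrow> xs, P i, Q i] = map f (filter (\<lambda>i. P i \<and> Q i) xs)"
  by (induction xs) auto

lemma del_eq: "del_two_cols j l F = mat_of_cols (dim_row F) (map (col F) (filter (\<lambda>i. i \<noteq> j \<and> i \<noteq> l) [0..<dim_col F]))"
  unfolding del_two_cols_def listcomp2 ..

theorem mainTheorem8:
  fixes F :: "real mat" and \<eta> :: real and n K j :: nat
  assumes F: "F \<in> carrier_mat n K" and eta: "\<eta> > 0" and j: "j < K"
  defines "B \<equiv> mat_inv (transpose_mat F * F + \<eta> \<cdot>\<^sub>m 1\<^sub>m K)"
  shows "col (F * B) j =
           B $$ (j, j) \<cdot>\<^sub>v col F j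
           + vec n (\<lambda>i. \<Sum>l\<in>{0..<K} - {j}. B $$ (j, l) * (col F l $ i))
         \<and> (\<forall>l<K. l \<noteq> j \<longrightarrow>
           sgn (B $$ (j, l)) = - sgn (col F j \<bullet> (P_proj \<eta> j l F *\<^sub>v col F l)))"
proof
  let ?A = "transpose_mat F * F + \<eta> \<cdot>\<^sub>m 1\<^sub>m K"
  note R = reg_inv[OF F eta, folded B_def]
  have Bsym: "\<And>a c. a < K \<Longrightarrow> c < K \<Longrightarrow> B $$ (a, c) = B $$ (c, a)"
  proof -
    fix a c assume "a < K" "c < K"
    hence "transpose_mat B $$ (c, a) = B $$ (a, c)" using R(1) by auto
    thus "B $$ (a, c) = B $$ (c, a)" using R(4) by simp
  qed
  show "col (F * B) j = B $$ (j, j) \<cdot>\<^sub>v col F j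
           + vec n (\<lambda>i. \<Sum>l\<in>{0..<K} - {j}. B $$ (j, l) * (col F l $ i))"
  proof (rule eq_vecI)
    fix i assume "i < dim_vec (B $$ (j, j) \<cdot>\<^sub>v col F j + vec n (\<lambda>i. \<Sum>l\<in>{0..<K} - {j}. B $$ (j, l) * (col F l $ i)))"
    hence i: "i < n" using F by auto
    have "col (F * B) j $ i = (\<Sum>l\<in>{0..<K}. F $$ (i, l) * B $$ (l, j))"
      using F R(1) i j by (simp add: scalar_prod_def)
    also have "\<dots> = (\<Sum>l\<in>{0..<K}. B $$ (j, l) * F $$ (i, l))"
      by (rule sum.cong) (auto simp: Bsym j)
    also have "\<dots> = B $$ (j, j) * F $$ (i, j) + (\<Sum>l\<in>{0..<K} - {j}. B $$ (j, l) * F $$ (i, l))"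
      using j by (subst sum.remove[of _ j]) auto
    also have "\<dots> = (B $$ (j, j) \<cdot>\<^sub>v col F j + vec n (\<lambda>i. \<Sum>l\<in>{0..<K} - {j}. B $$ (j, l) * (col F l $ i))) $ i"
      using F i j by (auto intro!: sum.cong)
    finally show "col (F * B) j $ i = (B $$ (j, j) \<cdot>\<^sub>v col F j + vec n (\<lambda>i. \<Sum>l\<in>{0..<K} - {j}. B $$ (j, l) * (col F l $ i))) $ i" .
  qed (use F R(1) in auto)
  show "\<forall>l<K. l \<noteq> j \<longrightarrow> sgn (B $$ (j, l)) = - sgn (col F j \<bullet> (P_proj \<eta> j l F *\<^sub>v col F l))"
  proof (intro allI impI)
    fix l assume l: "l < K" "l \<noteq> j"
    define b where "b = col B l"
    have b: "b \<in> carrier_vec K" unfolding b_def using R(1) by auto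
    have Ab: "?A *\<^sub>v b = unit_vec K l"
    proof -
      have "col (?A * B) l = ?A *\<^sub>v b" unfolding b_def using R(1) F l by (subst col_mult2[of _ K K]) auto
      thus ?thesis using R(2) l by simp
    qed
    define w where "w = F *\<^sub>v b"
    have w: "w \<in> carrier_vec n" unfolding w_def using F b mult_mat_vec_carrier by blast
    have eqs: "\<And>i. i < K \<Longrightarrow> col F i \<bullet> w + \<eta> * b $ i = (if i = l then 1 else 0)"
    proof -
      fix i assume i: "i < K"
      have "col F i \<bullet> w + \<eta> * b $ i = (?A *\<^sub>v b) $ i" unfolding w_def by (rule Cv_comp[OF F b i, symmetric])
      also have "\<dots> = (if i = l then 1 else 0)" unfolding Ab using i l by simp
      finally show "col F i \<bullet> w + \<eta> * b $ i = (if i = l then 1 else 0)" .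
    qed
    define idx where "idx = filter (\<lambda>i. i \<noteq> j \<and> i \<noteq> l) [0..<K]"
    define m where "m = length idx"
    have didx: "distinct idx" unfolding idx_def by simp
    have sidx: "set idx = {0..<K} - {j, l}" unfolding idx_def by auto
    have idxK: "\<And>s. s < m \<Longrightarrow> idx ! s < K \<and> idx ! s \<noteq> j \<and> idx ! s \<noteq> l"
      using sidx nth_mem unfolding m_def by fastforce
    define G where "G = del_two_cols j l F"
    have G_eq: "G = mat_of_cols n (map (col F) idx)" unfolding G_def del_eq idx_def using F by simp
    have G: "G \<in> carrier_mat n m" unfolding G_eq m_def by (metis length_map mat_of_cols_carrier(1))
    have colG: "\<And>s. s < m \<Longrightarrow> col G s = col F (idx ! s)"
      unfolding G_eq m_def using F idxK m_def by (subst col_mat_of_cols) auto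
    have Gidx: "\<And>r s. r < n \<Longrightarrow> s < m \<Longrightarrow> G $$ (r, s) = F $$ (r, idx ! s)"
    proof -
      fix r s assume rs: "r < n" "s < m"
      have "col G s $ r = col F (idx ! s) $ r" using colG[OF rs(2)] by simp
      thus "G $$ (r, s) = F $$ (r, idx ! s)" using rs G F idxK[OF rs(2)] by simp
    qed
    define bR where "bR = vec m (\<lambda>s. b $ (idx ! s))"
    have bR: "bR \<in> carrier_vec m" unfolding bR_def by simp
    define u where "u = b $ j \<cdot>\<^sub>v col F j + b $ l \<cdot>\<^sub>v col F l"
    have u: "u \<in> carrier_vec n" unfolding u_def using F by auto
    have wdec: "w = u + G *\<^sub>v bR"
    proof (rule eq_vecI)
      fix r assume "r < dim_vec (u + G *\<^sub>v bR)"
      hence r: "r < n" using u G by auto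
      have "w $ r = (\<Sum>i\<in>{0..<K}. F $$ (r, i) * b $ i)" unfolding w_def using F r b by (simp add: scalar_prod_def)
      also have "\<dots> = F $$ (r, j) * b $ j + F $$ (r, l) * b $ l + (\<Sum>i\<in>{0..<K} - {j, l}. F $$ (r, i) * b $ i)"
      proof -
        have "(\<Sum>i\<in>{0..<K}. F $$ (r, i) * b $ i) = (\<Sum>i\<in>{j, l}. F $$ (r, i) * b $ i) + (\<Sum>i\<in>{0..<K} - {j, l}. F $$ (r, i) * b $ i)"
          using j l by (subst sum.subset_diff[of "{j,l}"]) auto
        thus ?thesis using l by simp
      qed
      also have "(\<Sum>i\<in>{0..<K} - {j, l}. F $$ (r, i) * b $ i) = (\<Sum>s\<in>{0..<m}. F $$ (r, idx ! s) * b $ (idx ! s))"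
        unfolding m_def using reindex_sum[OF didx, of "\<lambda>i. F $$ (r, i) * b $ i"] sidx by simp
      also have "\<dots> = (G *\<^sub>v bR) $ r"
        using G r Gidx bR unfolding bR_def by (auto simp: scalar_prod_def intro!: sum.cong)
      finally show "w $ r = (u + G *\<^sub>v bR) $ r" using r u F G j l unfolding u_def by simp
    qed (use w u G in auto)
    let ?C = "transpose_mat G * G + \<eta> \<cdot>\<^sub>m 1\<^sub>m m"
    define M where "M = mat_inv ?C"
    note RG = reg_inv[OF G eta, folded M_def]
    have GT: "transpose_mat G \<in> carrier_mat m n" using G by auto
    have GTu: "transpose_mat G *\<^sub>v u \<in> carrier_vec m" using GT u mult_mat_vec_carrier by blast
    have CbR: "?C *\<^sub>v bR = (-1) \<cdot>\<^sub>v (transpose_mat G *\<^sub>v u)"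
    proof (rule eq_vecI)
      fix s assume "s < dim_vec ((-1) \<cdot>\<^sub>v (transpose_mat G *\<^sub>v u))"
      hence s: "s < m" using GT by auto
      have GbR: "G *\<^sub>v bR \<in> carrier_vec n" using G bR mult_mat_vec_carrier by blast
      have cF: "col F (idx ! s) \<in> carrier_vec n" using F idxK[OF s] by auto
      have "(?C *\<^sub>v bR) $ s = col G s \<bullet> (G *\<^sub>v bR) + \<eta> * bR $ s" by (rule Cv_comp[OF G bR s])
      also have "\<dots> = col F (idx ! s) \<bullet> (G *\<^sub>v bR) + \<eta> * b $ (idx ! s)" using colG[OF s] s unfolding bR_def by simp
      also have "\<dots> = (col F (idx ! s) \<bullet> w + \<eta> * b $ (idx ! s)) - col F (idx ! s) \<bullet> u"
        unfolding wdec using scalar_prod_add_distrib[OF cF u GbR] by simp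
      also have "\<dots> = - (col F (idx ! s) \<bullet> u)" using eqs[of "idx ! s"] idxK[OF s] by simp
      also have "\<dots> = ((-1) \<cdot>\<^sub>v (transpose_mat G *\<^sub>v u)) $ s" using s G colG[OF s] by simp
      finally show "(?C *\<^sub>v bR) $ s = ((-1) \<cdot>\<^sub>v (transpose_mat G *\<^sub>v u)) $ s" .
    qed (use G in auto)
    have Cc: "?C \<in> carrier_mat m m" using G by auto
    have bRM: "bR = M *\<^sub>v (?C *\<^sub>v bR)"
      using assoc_mult_mat_vec[OF RG(1) Cc bR] RG(3) bR by simp
    have Xu: "(G * M * transpose_mat G) *\<^sub>v u = G *\<^sub>v (M *\<^sub>v (transpose_mat G *\<^sub>v u))"
      using assoc_mult_mat_vec[of "G * M" n m "transpose_mat G" n u] assoc_mult_mat_vec[of G n m M m "transpose_mat G *\<^sub>v u"]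
        G RG(1) GT u by auto
    have MGTu: "M *\<^sub>v (transpose_mat G *\<^sub>v u) \<in> carrier_vec m" using RG(1) GTu mult_mat_vec_carrier by blast
    have GbR': "G *\<^sub>v bR = (-1) \<cdot>\<^sub>v ((G * M * transpose_mat G) *\<^sub>v u)"
      unfolding Xu using bRM CbR mult_mat_vec[OF RG(1) GTu, of "-1"] mult_mat_vec[OF G MGTu, of "-1"] by metis
    define P where "P = 1\<^sub>m n - G * M * transpose_mat G"
    have Pc: "P \<in> carrier_mat n n" unfolding P_def using G RG(1) by auto
    have Xc: "G * M * transpose_mat G \<in> carrier_mat n n" using G RG(1) by auto
    have wP: "w = P *\<^sub>v u"
    proof -
      have "P *\<^sub>v u = u - (G * M * transpose_mat G) *\<^sub>v u"
        unfolding P_def using Xc u by (subst minus_mult_distrib_mat_vec[of _ n n]) auto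
      thus ?thesis unfolding wdec GbR' using u Xc by (auto intro!: eq_vecI)
    qed
    have fj: "col F j \<in> carrier_vec n" and fl: "col F l \<in> carrier_vec n" using F j l by auto
    have Pfj: "P *\<^sub>v col F j \<in> carrier_vec n" and Pfl: "P *\<^sub>v col F l \<in> carrier_vec n"
      using Pc fj fl mult_mat_vec_carrier by blast+
    have Pu: "P *\<^sub>v u = b $ j \<cdot>\<^sub>v (P *\<^sub>v col F j) + b $ l \<cdot>\<^sub>v (P *\<^sub>v col F l)"
      unfolding u_def using Pc fj fl
      by (simp add: mult_add_distrib_mat_vec[of _ n n] mult_mat_vec[of _ n n])
    define p where "p = col F j \<bullet> (P *\<^sub>v col F j)"
    define q where "q = col F j \<bullet> (P *\<^sub>v col F l)"
    have p: "p \<ge> 0" unfolding p_def P_def M_def by (rule P_nonneg[OF G eta fj])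
    have rowj: "b $ j * (p + \<eta>) = - (b $ l * q)"
    proof -
      have "col F j \<bullet> w + \<eta> * b $ j = 0" using eqs[OF j] l by simp
      moreover have "col F j \<bullet> w = b $ j * p + b $ l * q"
        unfolding wP Pu p_def q_def
        using Pfj Pfl fj by (simp add: scalar_prod_add_distrib[of _ n])
      ultimately show ?thesis by (simp add: algebra_simps)
    qed
    have bl: "b $ l > 0"
    proof -
      have "b \<noteq> 0\<^sub>v K"
      proof
        assume "b = 0\<^sub>v K"
        hence "?A *\<^sub>v b = 0\<^sub>v K" using F by auto
        hence "unit_vec K l $ l = (0::real)" using Ab l by (metis index_zero_vec(1))
        thus False using l by simp
      qed
      hence "b \<bullet> b > 0" using dot_self_pos b by blast
      moreover have "b \<bullet> (?A *\<^sub>v b) = b $ l" unfolding Ab using l by simp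
      ultimately show ?thesis unfolding quad[OF F b]
        using dot_self_nonneg[of "F *\<^sub>v b"] eta by (smt (verit) mult_pos_pos)
    qed
    have bj: "b $ j = B $$ (j, l)" unfolding b_def using R(1) j l by simp
    have PP: "P_proj \<eta> j l F = P"
      unfolding P_proj_def Let_def P_def M_def G_def[symmetric] using F G by simp
    have "b $ j = - (b $ l * q) / (p + \<eta>)" using rowj p eta by (simp add: field_simps)
    hence "sgn (b $ j) = - sgn q" using bl p eta by (simp add: sgn_mult sgn_divide)
    thus "sgn (B $$ (j, l)) = - sgn (col F j \<bullet> (P_proj \<eta> j l F *\<^sub>v col F l))"
      unfolding PP bj[symmetric] q_def .
  qed
qed

end
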